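(* Let $q$ be a power of an odd prime, $d\ge 1$, and $E\subset\mathbb{F}_q^d$. If $|E|>\frac{q^d-1}{q-1}+1$, then $E$ contains three distinct collinear points. If moreover $d$ is even, then already $|E|>\frac{q^d-1}{q-1}$ implies that $E$ contains three distinct collinear points.
   Context: A line in $\mathbb{F}_q^d$ is a set $\{u+rv: r\in\mathbb{F}_q\}$ with $u,v\in\mathbb{F}_q^d$, $v\neq0$; points are collinear if they lie on a common line. *)

theory Defs
  imports "HOL-Analysis.Finite_Cartesian_Product"
begin

text \<open>A line in F^d (vectors indexed by the finite type 'n, d = CARD('n)):
  a set {u + r v : r in F} with v nonzero.\<close>
definition is_line :: "('a::field ^ 'n) set \<Rightarrow> bool" where
  "is_line L \<longleftrightarrow> (\<exists>u v. v \<noteq> 0 \<and> L = {u + r *s v | r. True})"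

definition collinear_pts :: "('a::field ^ 'n) set \<Rightarrow> bool" where
  "collinear_pts S \<longleftrightarrow> (\<exists>L. is_line L \<and> S \<subseteq> L)"

definition has_three_collinear :: "('a::field ^ 'n) set \<Rightarrow> bool" where
  "has_three_collinear E \<longleftrightarrow>
     (\<exists>x\<in>E. \<exists>y\<in>E. \<exists>z\<in>E. x \<noteq> y \<and> x \<noteq> z \<and> y \<noteq> z \<and> collinear_pts {x, y, z})"

end

theory Submission
  imports Defs
begin

lemma geo_nat: "(q::nat) \<ge> 1 \<Longrightarrow> q^d - 1 = (q-1) * (\<Sum>i<d. q^i)"
proof -
  assume q: "q \<ge> 1"
  have "int (q^d - 1) = int q ^ d - 1" using q by (simp add: of_nat_diff)
  also have "\<dots> = (int q - 1) * (\<Sum>i<d. int q ^ i)" by (rule power_diff_1_eq)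
  also have "\<dots> = int ((q-1) * (\<Sum>i<d. q^i))" using q by (simp add: of_nat_diff)
  finally show ?thesis by linarith
qed

lemma geo_par: "odd (q::nat) \<Longrightarrow> even (\<Sum>i<d. q^i) \<longleftrightarrow> even d"
  by (induction d) auto

lemma col3:
  fixes a b c :: "'a::field ^ 'n"
  assumes "a \<in> E" "b \<in> E" "c \<in> E" "a \<noteq> b" "a \<noteq> c" "b \<noteq> c"
    and "c - a = t *s (b - a)"
  shows "has_three_collinear E"
proof -
  have "b - a \<noteq> 0" using assms by simp
  moreover have "{a, b, c} \<subseteq> {a + r *s (b - a) | r. True}"
  proof -
    have "a = a + 0 *s (b - a)" by simp
    moreover have "b = a + 1 *s (b - a)" by simp
    moreover have "c = a + t *s (b - a)" using assms(7) by (metis add.commute diff_add_cancel)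
    ultimately show ?thesis by blast
  qed
  ultimately have "collinear_pts {a, b, c}"
    unfolding collinear_pts_def is_line_def by blast
  then show ?thesis unfolding has_three_collinear_def using assms by blast
qed

lemma even_pairing:
  assumes "finite S"
    and "\<forall>y\<in>S. \<exists>z. R y z"
    and "\<forall>a\<in>S. \<forall>b. R a b \<longrightarrow> b \<in> S \<and> b \<noteq> a \<and> R b a"
    and "\<forall>y z z'. R y z \<longrightarrow> R y z' \<longrightarrow> z = z'"
  shows "even (card S)"
  using assms
proof (induction "card S" arbitrary: S rule: less_induct)
  case less
  show ?case
  proof (cases "S = {}")
    case True then show ?thesis by simp
  next
    case False
    then obtain y where y: "y \<in> S" by blast
    then obtain z where z: "R y z" using less.prems by blast
    have zS: "z \<in> S" "z \<noteq> y" "R z y" using less.prems(3) y z by blast+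
    define S' where "S' = S - {y, z}"
    have sub: "{y, z} \<subseteq> S" using y zS by blast
    have c2: "card {y, z} = 2" using zS by simp
    have "card {y, z} \<le> card S" using card_mono[OF less.prems(1) sub] .
    moreover have "card S' = card S - card {y, z}" unfolding S'_def
      using card_Diff_subset[OF _ sub] by simp
    ultimately have cS: "card S = card S' + 2" using c2 by linarith
    have "even (card S')"
    proof (rule less.hyps)
      show "card S' < card S" using cS by simp
      show "finite S'" using less.prems(1) S'_def by simp
      show "\<forall>y\<in>S'. \<exists>z. R y z" using less.prems(2) unfolding S'_def by blast
      show "\<forall>a\<in>S'. \<forall>b. R a b \<longrightarrow> b \<in> S' \<and> b \<noteq> a \<and> R b a"
      proof (intro ballI allI impI)
        fix a b assume a: "a \<in> S'" and ab: "R a b"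
        have aS: "a \<in> S" using a unfolding S'_def by blast
        have 1: "b \<in> S" "b \<noteq> a" "R b a" using less.prems(3) aS ab by blast+
        have "b \<noteq> y"
        proof
          assume "b = y"
          then have "R y a" using 1 by simp
          then have "a = z" using less.prems(4) z by blast
          then show False using a S'_def by simp
        qed
        moreover have "b \<noteq> z"
        proof
          assume "b = z"
          then have "R z a" using 1 by simp
          then have "a = y" using less.prems(4) zS(3) by blast
          then show False using a S'_def by simp
        qed
        ultimately show "b \<in> S' \<and> b \<noteq> a \<and> R b a" using 1 unfolding S'_def by blast
      qed
      show "\<forall>y z z'. R y z \<longrightarrow> R y z' \<longrightarrow> z = z'" using less.prems(4) by blast
    qed
    then show ?thesis using cS by simp
  qed
qed


lemma cap_inj:
  fixes E :: "('a::{field,finite} ^ 'n) set"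
  assumes nc: "\<not> has_three_collinear E" and p: "p \<in> E"
  shows "inj_on (\<lambda>(x, r). r *s (x - p)) ((E - {p}) \<times> (UNIV - {0}))"
proof (rule inj_onI)
  fix a b assume aD: "a \<in> (E - {p}) \<times> (UNIV - {0})" and bD: "b \<in> (E - {p}) \<times> (UNIV - {0})"
    and fab: "(\<lambda>(x, r). r *s (x - p)) a = (\<lambda>(x, r). r *s (x - p)) b"
  obtain x r where a: "a = (x, r)" by (cases a)
  obtain y s where b: "b = (y, s)" by (cases b)
  have x: "x \<in> E" "x \<noteq> p" and r: "r \<noteq> (0::'a)" using aD a by auto
  have y: "y \<in> E" "y \<noteq> p" and s: "s \<noteq> (0::'a)" using bD b by auto
  have eq: "r *s (x - p) = s *s (y - p)" using fab a b by simp
  have "x = y \<and> r = s"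
  proof (cases "x = y")
    case True
    then have "r = s" using eq x by simp
    then show ?thesis using True by simp
  next
    case False
    have "x - p = (s / r) *s (y - p)"
    proof -
      have "\<forall>i. r * (x$i - p$i) = s * (y$i - p$i)" using eq by (simp add: vec_eq_iff)
      then show ?thesis using r by (simp add: vec_eq_iff field_simps)
    qed
    then have "has_three_collinear E" using col3[of p E y x "s / r"] p x y False by metis
    then show ?thesis using nc by simp
  qed
  then show "a = b" using a b by simp
qed

lemma card_nonzero_vec: "card (UNIV - {0} :: ('a::{field,finite} ^ 'n) set) = CARD('a) ^ CARD('n) - 1"
  by (simp add: card_Diff_singleton)

lemma cap_card:
  fixes E :: "('a::{field,finite} ^ 'n) set"
  assumes nc: "\<not> has_three_collinear E" and p: "p \<in> E"
  shows "(card E - 1) * (CARD('a) - 1) \<le> CARD('a) ^ CARD('n) - 1"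
    and "(card E - 1) * (CARD('a) - 1) = CARD('a) ^ CARD('n) - 1 \<Longrightarrow> v \<noteq> 0 \<Longrightarrow>
         \<exists>x\<in>E. x \<noteq> p \<and> (\<exists>r. r \<noteq> 0 \<and> v = r *s (x - p))"
proof -
  let ?D = "(E - {p}) \<times> (UNIV - {0::'a})"
  let ?f = "\<lambda>(x, r). r *s (x - p)"
  have inj: "inj_on ?f ?D" by (rule cap_inj[OF nc p])
  have sub: "?f ` ?D \<subseteq> UNIV - {0}" using p by auto
  have cD: "card ?D = (card E - 1) * (CARD('a) - 1)"
    using p by (simp add: card_cartesian_product card_Diff_singleton)
  have ci: "card (?f ` ?D) = card ?D" using card_image[OF inj] .
  show "(card E - 1) * (CARD('a) - 1) \<le> CARD('a) ^ CARD('n) - 1"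
    using card_mono[OF _ sub] ci cD card_nonzero_vec by (metis finite)
  assume eq: "(card E - 1) * (CARD('a) - 1) = CARD('a) ^ CARD('n) - 1" and v: "v \<noteq> 0"
  have "?f ` ?D = UNIV - {0}"
    using card_subset_eq[OF _ sub] ci cD card_nonzero_vec eq by (metis finite)
  then have "v \<in> ?f ` ?D" using v by simp
  then show "\<exists>x\<in>E. x \<noteq> p \<and> (\<exists>r. r \<noteq> 0 \<and> v = r *s (x - p))" by auto
qed

theorem mainTheorem11:
  fixes E :: "('a::{field,finite} ^ 'n) set"
  assumes "odd CARD('a)"
  shows "(card E > (CARD('a) ^ CARD('n) - 1) div (CARD('a) - 1) + 1 \<longrightarrow> has_three_collinear E)
       \<and> (even CARD('n) \<and> card E > (CARD('a) ^ CARD('n) - 1) div (CARD('a) - 1)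
            \<longrightarrow> has_three_collinear E)"
proof -
  define q where "q = CARD('a)"
  define d where "d = CARD('n)"
  define N where "N = (\<Sum>i<d. q^i)"
  have q2: "q \<ge> 2"
  proof -
    have "card {0::'a, 1} = 2" by simp
    moreover have "card {0::'a, 1} \<le> q" unfolding q_def by (rule card_mono) auto
    ultimately show ?thesis by simp
  qed
  have q3: "q \<ge> 3" using q2 assms q_def by presburger
  have d1: "d \<ge> 1" unfolding d_def using finite_UNIV_card_ge_0 by auto
  have geo: "q^d - 1 = (q-1) * N" unfolding N_def using geo_nat q2 by simp
  have hN: "(q^d - 1) div (q - 1) = N" using geo q2 by simp
  have bound: "card E \<le> N + 1" if nc: "\<not> has_three_collinear E"
  proof (cases "E = {}")
    case True then show ?thesis by simp
  next
    case False
    then obtain p where p: "p \<in> E" by blast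
    have "(card E - 1) * (q - 1) \<le> (q - 1) * N"
      using cap_card(1)[OF nc p] geo unfolding q_def d_def by simp
    then have "card E - 1 \<le> N" using q2 by (simp add: mult.commute)
    then show ?thesis by simp
  qed
  have part2: "has_three_collinear E" if ev: "even d" and cE: "card E > N"
  proof (rule ccontr)
    assume nc: "\<not> has_three_collinear E"
    have cE1: "card E = N + 1" using bound[OF nc] cE by simp
    have eqc: "(card E - 1) * (CARD('a) - 1) = CARD('a) ^ CARD('n) - 1"
      using cE1 geo unfolding q_def d_def by (simp add: mult.commute)
    have N1: "N \<ge> 1"
    proof -
      obtain d' where "d = Suc d'" using d1 by (cases d) auto
      moreover have "q^d' \<ge> 1" using q2 by simp
      ultimately show ?thesis unfolding N_def by simp
    qed
    have "card E < CARD('a ^ 'n)"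
    proof -
      have "q^d = (q-1)*N + 1" 
      proof -
        have "q^d \<ge> 1" using q2 by simp
        then show ?thesis using geo by arith
      qed
      moreover have "(q-1)*N \<ge> 2*N" using q3 by (intro mult_right_mono) auto
      ultimately show ?thesis using cE1 N1 q_def d_def by simp
    qed
    then obtain x0 where x0: "x0 \<notin> E"
      by (metis card_mono finite leD subsetI)
    define R where "R y z \<longleftrightarrow> y \<in> E \<and> z \<in> E \<and> z \<noteq> y \<and> (\<exists>t. z - y = t *s (y - x0))" for y z
    have ex: "\<forall>y\<in>E. \<exists>z. R y z"
    proof
      fix y assume y: "y \<in> E"
      have "x0 - y \<noteq> 0" using x0 y by auto
      then obtain x r where x: "x \<in> E" "x \<noteq> y" and r: "r \<noteq> 0" and v: "x0 - y = r *s (x - y)"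
        using cap_card(2)[OF nc y eqc] by blast
      have "x - y = (- inverse r) *s (y - x0)"
      proof -
        have "\<forall>i. x0$i - y$i = r * (x$i - y$i)" using v by (simp add: vec_eq_iff)
        then show ?thesis using r by (simp add: vec_eq_iff field_simps)
      qed
      then show "\<exists>z. R y z" unfolding R_def using x y by blast
    qed
    have uniq: "\<forall>y z z'. R y z \<longrightarrow> R y z' \<longrightarrow> z = z'"
    proof (intro allI impI)
      fix y z z' assume Rz: "R y z" and Rz': "R y z'"
      obtain t where t: "z - y = t *s (y - x0)" and z: "z \<in> E" "z \<noteq> y" using Rz R_def by blast
      obtain t' where t': "z' - y = t' *s (y - x0)" and z': "z' \<in> E" "z' \<noteq> y" using Rz' R_def by blast
      have yE: "y \<in> E" using Rz R_def by blast
      show "z = z'"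
      proof (rule ccontr)
        assume zz: "z \<noteq> z'"
        have t0: "t \<noteq> 0" using t z by auto
        have "z' - y = (t' / t) *s (z - y)"
          using t t' t0 by (simp add: vector_smult_assoc)
        then have "has_three_collinear E" using col3[of y E z z' "t' / t"] yE z z' zz by metis
        then show False using nc by simp
      qed
    qed
    have sym: "\<forall>a\<in>E. \<forall>b. R a b \<longrightarrow> b \<in> E \<and> b \<noteq> a \<and> R b a"
    proof (intro ballI allI impI)
      fix a b assume aE: "a \<in> E" and Rab: "R a b"
      obtain t where t: "b - a = t *s (a - x0)" and b: "b \<in> E" "b \<noteq> a" using Rab R_def by blast
      have bx: "b - x0 = (1 + t) *s (a - x0)"
      proof -
        have "b - x0 = (b - a) + (a - x0)" by simp
        also have "\<dots> = (1 + t) *s (a - x0)" using t by (simp add: vector_sadd_rdistrib)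
        finally show ?thesis .
      qed
      have t1: "1 + t \<noteq> 0"
      proof
        assume "1 + t = 0"
        then have "b = x0" using bx by simp
        then show False using b x0 by simp
      qed
      have "a - b = (- t / (1 + t)) *s (b - x0)"
      proof -
        have "(- t / (1 + t)) *s (b - x0) = (- t / (1 + t) * (1 + t)) *s (a - x0)"
          using bx by (simp add: vector_smult_assoc)
        also have "\<dots> = (- t) *s (a - x0)" using t1 by simp
        also have "\<dots> = a - b" by (simp add: vector_smult_lneg flip: t)
        finally show ?thesis by simp
      qed
      then show "b \<in> E \<and> b \<noteq> a \<and> R b a" unfolding R_def using aE b by blast
    qed
    have "even (card E)" using even_pairing[OF finite ex sym uniq] .
    moreover have "even N" unfolding N_def using geo_par assms q_def ev by blast
    ultimately show False using cE1 by simp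
  qed
  show ?thesis
  proof (intro conjI impI)
    assume "(CARD('a) ^ CARD('n) - 1) div (CARD('a) - 1) + 1 < card E"
    then have "N + 1 < card E" using hN q_def d_def by simp
    then show "has_three_collinear E" using bound by fastforce
  next
    assume "even CARD('n) \<and> (CARD('a) ^ CARD('n) - 1) div (CARD('a) - 1) < card E"
    then show "has_three_collinear E" using part2 hN q_def d_def by simp
  qed
qed

end
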